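(* Assume the walk's transition probabilities $p$ are non-reversible: there do not exist $m_V:\tilde V\to\mathbb{R}$, not identically zero, and $m_E:\tilde E\to\mathbb{R}$ with $p(a)m_V(o(a))=p(\bar a)m_V(t(a))=m_E(|a|)$ for all $a\in\tilde A$. Let $\Psi_\infty$ be the stationary state, and set $$\boldsymbol{\alpha}_{in}=[\Psi_\infty(e_1),\dots,\Psi_\infty(e_r)]^\top,\qquad \boldsymbol{\beta}_{out}=[\Psi_\infty(\bar e_1),\dots,\Psi_\infty(\bar e_r)]^\top.$$ Then $\boldsymbol{\beta}_{out}=-\boldsymbol{\alpha}_{in}$. Moreover: 1. $\sum_{a\in\tilde A:\,t(a)=u}\sqrt{p(\bar a)}\,\Psi_\infty(a)=0$ for every $u\in\tilde V$; 2. $\Psi_\infty(\bar a)=-\Psi_\infty(a)$ for every $a\in\tilde A$; 3. $\Psi_\infty$ is orthogonal to $\ker(1-\chi^*E_{PON}\chi)$. That is, for every $\varphi:\tilde A\to\mathbb{C}$ with $\varphi=\chi^*E_{PON}\chi\varphi$, we have $\sum_{a\in\tilde A}\overline{\varphi(a)}\Psi_\infty(a)=0$. Such $\varphi$ is supported on $A_0$, so the sum is finite.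
   Context: **Symmetric directed graphs.** A symmetric directed graph $(V,A)$ has the following structure. - Each arc $a$ has an origin $o(a)$ and a terminus $t(a)$. - Each arc $a$ has an inverse arc $\bar a$ with $o(\bar a)=t(a)$, $t(\bar a)=o(a)$ and $\bar{\bar a}=a$. - $|a|=|\bar a|$ denotes the undirected edge. **The tailed graph.** - Let $G_0=(V_0,A_0)$ be a finite symmetric directed graph and let $r\ge1$. - For $j=1,\dots,r$, let $\mathbb{P}_j$ be a semi-infinite path ("tail") with vertices $v^j_0,v^j_1,\dots$ and arcs $A(\mathbb{P}_j)$ in both directions between consecutive vertices. - The end vertex is $o(\mathbb{P}_j)=v^j_0$. We require $V(\mathbb{P}_j)\cap V_0=\{o(\mathbb{P}_j)\}$, and distinct tails share no vertices outside $V_0$. - Let $\tilde G=(\tilde V,\tilde A)=G_0\cup\bigcup_j\mathbb{P}_j$, with undirected edge set $\tilde E$. - Let $e_j$ be the arc from $v^j_1$ to $o(\mathbb{P}_j)$. **Transition probabilities.** Let $p:\tilde A\to(0,1]$ satisfy: - $\sum_{o(a)=u}p(a)=1$ for all $u\in\tilde V$; - $p(a)=1/2$ on $\bigcup_jA(\mathbb{P}_j)\setminus\{\bar e_1,\dots,\bar e_r\}$. **Szegedy walk.** For $\Psi:\tilde A\to\mathbb{C}$, $$(U\Psi)(a)=\sum_{b:\,t(b)=o(a)}\big(2\sqrt{p(a)p(\bar b)}-\delta_{\bar a,b}\big)\Psi(b).$$ **Restriction operators.** - $\chi:\mathbb{C}^{\tilde A}\to\mathbb{C}^{A_0}$ is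 restriction to $A_0$. - $\chi^*$ is extension by zero. - $E_{PON}=\chi U\chi^*$, the restriction of $U$ to $A_0$. **Initial state and stationary state.** Fix $\alpha_1,\dots,\alpha_r\in\mathbb{C}$. - $\Psi_0(a)=\alpha_j$ for $a\in A(\mathbb{P}_j)$ with $\mathrm{dist}(o(\mathbb{P}_j),t(a))<\mathrm{dist}(o(\mathbb{P}_j),o(a))$. - $\Psi_0(a)=0$ otherwise. - Set $\Psi_{n+1}=U\Psi_n$. - The pointwise limit $\Psi_\infty=\lim_n\Psi_n$ exists (known fact) and is called the stationary state. *)

theory Defs
  imports "HOL-Analysis.Analysis"
begin

text \<open>A symmetric digraph is given by an arc set A with origin o, terminus t
and inverse bar.  The Szegedy evolution operator U (acting on functions on
arcs; only values on A matter).\<close>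

definition szegedy ::
  "'b set \<Rightarrow> ('b \<Rightarrow> 'w) \<Rightarrow> ('b \<Rightarrow> 'w) \<Rightarrow> ('b \<Rightarrow> 'b) \<Rightarrow> ('b \<Rightarrow> real)
   \<Rightarrow> ('b \<Rightarrow> complex) \<Rightarrow> ('b \<Rightarrow> complex)" where
  "szegedy A org trm bar p \<Psi> a =
     (\<Sum>b\<in>{b\<in>A. trm b = org a}.
        (complex_of_real (2 * sqrt (p a * p (bar b))) - (if b = bar a then 1 else 0)) * \<Psi> b)"

text \<open>chi^* chi: restriction to B followed by extension by zero.\<close>
definition cut :: "'b set \<Rightarrow> ('b \<Rightarrow> complex) \<Rightarrow> ('b \<Rightarrow> complex)" where
  "cut B \<Psi> a = (if a \<in> B then \<Psi> a else 0)"

text \<open>Reversibility: m_V on vertices (not identically zero on V) and m_E on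
undirected edges |a| = {a, bar a}.\<close>
definition reversible ::
  "'w set \<Rightarrow> 'b set \<Rightarrow> ('b \<Rightarrow> 'w) \<Rightarrow> ('b \<Rightarrow> 'w) \<Rightarrow> ('b \<Rightarrow> 'b) \<Rightarrow> ('b \<Rightarrow> real) \<Rightarrow> bool" where
  "reversible V A org trm bar p \<longleftrightarrow>
     (\<exists>mV :: 'w \<Rightarrow> real. \<exists>mE :: 'b set \<Rightarrow> real.
        (\<exists>v\<in>V. mV v \<noteq> 0) \<and>
        (\<forall>a\<in>A. p a * mV (org a) = p (bar a) * mV (trm a) \<and>
                p (bar a) * mV (trm a) = mE {a, bar a}))"

text \<open>Vertices: V v for v in V0, and T j k = v^j_k (k >= 1) on tail j.
Tails are indexed by j = 0..r-1; tail j is attached at att j = o(P_j) = v^j_0.\<close>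
datatype 'v tvert = V 'v | T nat nat

text \<open>Arcs: Old a for a in A0; Out j k : v^j_k -> v^j_(k+1);
In j k : v^j_(k+1) -> v^j_k.  Thus e_j = In j 0 and its inverse is Out j 0.\<close>
datatype 'a tarc = Old 'a | Out nat nat | In nat nat

definition tv :: "(nat \<Rightarrow> 'v) \<Rightarrow> nat \<Rightarrow> nat \<Rightarrow> 'v tvert" where
  "tv att j k = (if k = 0 then V (att j) else T j k)"

definition tverts :: "'v set \<Rightarrow> nat \<Rightarrow> 'v tvert set" where
  "tverts V0 r = V ` V0 \<union> {T j k | j k. j < r \<and> 1 \<le> k}"

definition tarcs :: "'a set \<Rightarrow> nat \<Rightarrow> 'a tarc set" where
  "tarcs A0 r = Old ` A0 \<union> {Out j k | j k. j < r} \<union> {In j k | j k. j < r}"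

fun torig :: "('a \<Rightarrow> 'v) \<Rightarrow> (nat \<Rightarrow> 'v) \<Rightarrow> 'a tarc \<Rightarrow> 'v tvert" where
  "torig o0 att (Old a) = V (o0 a)"
| "torig o0 att (Out j k) = tv att j k"
| "torig o0 att (In j k) = tv att j (Suc k)"

fun tterm :: "('a \<Rightarrow> 'v) \<Rightarrow> (nat \<Rightarrow> 'v) \<Rightarrow> 'a tarc \<Rightarrow> 'v tvert" where
  "tterm t0 att (Old a) = V (t0 a)"
| "tterm t0 att (Out j k) = tv att j (Suc k)"
| "tterm t0 att (In j k) = tv att j k"

fun tinv :: "('a \<Rightarrow> 'a) \<Rightarrow> 'a tarc \<Rightarrow> 'a tarc" where
  "tinv inv0 (Old a) = Old (inv0 a)"
| "tinv inv0 (Out j k) = In j k"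
| "tinv inv0 (In j k) = Out j k"

fun Psi0 :: "(nat \<Rightarrow> complex) \<Rightarrow> 'a tarc \<Rightarrow> complex" where
  "Psi0 \<alpha> (Old a) = 0"
| "Psi0 \<alpha> (Out j k) = 0"
| "Psi0 \<alpha> (In j k) = \<alpha> j"

end

theory Submission
  imports Defs
begin

locale tg =
  fixes V0 :: "'v set" and A0 :: "'a set"
    and o0 t0 :: "'a \<Rightarrow> 'v" and inv0 :: "'a \<Rightarrow> 'a"
    and r :: nat and att :: "nat \<Rightarrow> 'v"
    and p :: "'a tarc \<Rightarrow> real"
  assumes finV0: "finite V0" and finA0: "finite A0"
    and G0_orig: "\<forall>a\<in>A0. o0 a \<in> V0" and G0_term: "\<forall>a\<in>A0. t0 a \<in> V0"
    and G0_inv: "\<forall>a\<in>A0. inv0 a \<in> A0 \<and> inv0 (inv0 a) = a \<and> inv0 a \<noteq> a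
                     \<and> o0 (inv0 a) = t0 a \<and> t0 (inv0 a) = o0 a"
    and att_in: "\<forall>j<r. att j \<in> V0"
    and p_range: "\<forall>a\<in>tarcs A0 r. 0 < p a \<and> p a \<le> 1"
    and p_stoch: "\<forall>u\<in>tverts V0 r. (\<Sum>a\<in>{a\<in>tarcs A0 r. torig o0 att a = u}. p a) = 1"
begin

abbreviation "AA \<equiv> tarcs A0 r"
abbreviation "VV \<equiv> tverts V0 r"
abbreviation "org \<equiv> torig o0 att"
abbreviation "trm \<equiv> tterm t0 att"
abbreviation "bar \<equiv> tinv inv0"
abbreviation "UU \<equiv> szegedy AA org trm bar p"

lemma bar_in: "a \<in> AA \<Longrightarrow> bar a \<in> AA"
  using G0_inv by (cases a) (auto simp: tarcs_def)

lemma bar_bar: "a \<in> AA \<Longrightarrow> bar (bar a) = a"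
  using G0_inv by (cases a) (auto simp: tarcs_def)

lemma bar_neq: "a \<in> AA \<Longrightarrow> bar a \<noteq> a"
  using G0_inv by (cases a) (auto simp: tarcs_def)

lemma org_bar: "a \<in> AA \<Longrightarrow> org (bar a) = trm a"
  using G0_inv by (cases a) (auto simp: tarcs_def)

lemma trm_bar: "a \<in> AA \<Longrightarrow> trm (bar a) = org a"
  using G0_inv by (cases a) (auto simp: tarcs_def)

lemma org_in: "a \<in> AA \<Longrightarrow> org a \<in> VV"
  using G0_orig att_in by (cases a) (auto simp: tarcs_def tverts_def tv_def)

lemma trm_in: "a \<in> AA \<Longrightarrow> trm a \<in> VV"
  using G0_term att_in by (cases a) (auto simp: tarcs_def tverts_def tv_def)

lemma p_pos: "a \<in> AA \<Longrightarrow> p a > 0"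
  using p_range by auto

lemma in_sub: "{b\<in>AA. trm b = u} \<subseteq> Old ` A0 \<union> (\<lambda>j. In j 0) ` {..<r} \<union>
   (case u of V _ \<Rightarrow> {} | T j k \<Rightarrow> {Out j (k - 1), In j k})"
proof
  fix b assume "b \<in> {b\<in>AA. trm b = u}"
  then show "b \<in> Old ` A0 \<union> (\<lambda>j. In j 0) ` {..<r} \<union>
   (case u of V _ \<Rightarrow> {} | T j k \<Rightarrow> {Out j (k - 1), In j k})"
    by (cases b) (auto simp: tarcs_def tv_def split: if_splits)
qed

lemma fin_in: "finite {b\<in>AA. trm b = u}"
  by (rule finite_subset[OF in_sub]) (auto simp: finA0 split: tvert.splits)

definition F :: "('a tarc \<Rightarrow> complex) \<Rightarrow> 'v tvert \<Rightarrow> complex" where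
  "F \<Psi> u = (\<Sum>b\<in>{b\<in>AA. trm b = u}. complex_of_real (sqrt (p (bar b))) * \<Psi> b)"

lemma expand: assumes a: "a \<in> AA"
  shows "UU \<Psi> a = 2 * complex_of_real (sqrt (p a)) * F \<Psi> (org a) - \<Psi> (bar a)"
proof -
  let ?S = "{b\<in>AA. trm b = org a}"
  have ba: "bar a \<in> ?S" using a bar_in trm_bar by auto
  have "UU \<Psi> a = (\<Sum>b\<in>?S. complex_of_real (2 * sqrt (p a * p (bar b))) * \<Psi> b)
      - (\<Sum>b\<in>?S. (if b = bar a then 1 else 0) * \<Psi> b)"
    unfolding szegedy_def by (simp add: sum_subtractf algebra_simps)
  also have "(\<Sum>b\<in>?S. (if b = bar a then 1 else 0) * \<Psi> b) = \<Psi> (bar a)"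
  proof -
    have "(\<lambda>b. (if b = bar a then 1 else 0) * \<Psi> b) = (\<lambda>b. if b = bar a then \<Psi> b else 0)"
      by auto
    then show ?thesis using fin_in[of "org a"] ba by (simp only: sum.delta') simp
  qed
  also have "(\<Sum>b\<in>?S. complex_of_real (2 * sqrt (p a * p (bar b))) * \<Psi> b)
     = 2 * complex_of_real (sqrt (p a)) * F \<Psi> (org a)"
    unfolding F_def sum_distrib_left by (rule sum.cong) (auto simp: real_sqrt_mult)
  finally show ?thesis .
qed

lemma rel_sq:
  assumes a: "a \<in> AA"
    and rel: "complex_of_real (sqrt (p a)) * g (org a) = complex_of_real (sqrt (p (bar a))) * g (trm a)"
  shows "p a * (cmod (g (org a)))\<^sup>2 = p (bar a) * (cmod (g (trm a)))\<^sup>2"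
proof -
  have pa: "p a \<ge> 0" "p (bar a) \<ge> 0" using p_pos a bar_in by (auto intro: less_imp_le)
  have "(cmod (complex_of_real (sqrt (p a)) * g (org a)))\<^sup>2
      = (cmod (complex_of_real (sqrt (p (bar a))) * g (trm a)))\<^sup>2" using rel by simp
  then show ?thesis using pa by (simp add: norm_mult power_mult_distrib)
qed

lemma nonrev_zero:
  assumes nr: "\<not> reversible VV AA org trm bar p"
    and rel: "\<forall>a\<in>AA. complex_of_real (sqrt (p a)) * g (org a) = complex_of_real (sqrt (p (bar a))) * g (trm a)"
    and u: "u \<in> VV"
  shows "g u = 0"
proof (rule ccontr)
  assume gu: "g u \<noteq> 0"
  define mV where "mV = (\<lambda>w. (cmod (g w))\<^sup>2)"
  define mE where "mE = (\<lambda>s. let a = (SOME a. a \<in> AA \<and> s = {a, bar a}) in p (bar a) * mV (trm a))"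
  have sq: "p a * mV (org a) = p (bar a) * mV (trm a)" if "a \<in> AA" for a
    using rel_sq[OF that] rel that unfolding mV_def by blast
  have "reversible VV AA org trm bar p"
    unfolding reversible_def
  proof (intro exI conjI ballI)
    show "\<exists>v\<in>VV. mV v \<noteq> 0" using u gu unfolding mV_def by auto
  next
    fix a assume a: "a \<in> AA"
    show "p a * mV (org a) = p (bar a) * mV (trm a)" using sq[OF a] .
    define a' where "a' = (SOME x. x \<in> AA \<and> {a, bar a} = {x, bar x})"
    have "\<exists>x. x \<in> AA \<and> {a, bar a} = {x, bar x}" using a by blast
    then have a': "a' \<in> AA \<and> {a, bar a} = {a', bar a'}" unfolding a'_def by (rule someI_ex)
    then have "a' = a \<or> a' = bar a" by (metis doubleton_eq_iff)
    then have "p (bar a') * mV (trm a') = p (bar a) * mV (trm a)"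
    proof
      assume "a' = bar a"
      then show ?thesis using sq[OF a] bar_bar[OF a] trm_bar[OF a] by simp
    qed simp
    then show "p (bar a) * mV (trm a) = mE {a, bar a}"
      unfolding mE_def a'_def Let_def by simp
  qed
  then show False using nr by simp
qed

lemma fixed_rel:
  assumes fx: "\<forall>a\<in>{a, bar a}. UU \<Psi> a = \<Psi> a" and a: "a \<in> AA"
  shows "complex_of_real (sqrt (p a)) * F \<Psi> (org a) = complex_of_real (sqrt (p (bar a))) * F \<Psi> (trm a)"
proof -
  have 1: "\<Psi> a = 2 * complex_of_real (sqrt (p a)) * F \<Psi> (org a) - \<Psi> (bar a)"
    using fx[rule_format, of a, simplified, symmetric] expand[OF a, of \<Psi>] by (rule trans)
  have 2: "\<Psi> (bar a) = 2 * complex_of_real (sqrt (p (bar a))) * F \<Psi> (trm a) - \<Psi> a"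
    using fx[rule_format, of "bar a", simplified, symmetric] expand[OF bar_in[OF a], of \<Psi>] org_bar[OF a] bar_bar[OF a] by simp
  from 1 2 show ?thesis by (simp add: algebra_simps)
qed

lemma fixed_props:
  assumes nr: "\<not> reversible VV AA org trm bar p"
    and fx: "\<forall>a\<in>AA. UU \<Psi> a = \<Psi> a"
  shows "\<forall>u\<in>VV. F \<Psi> u = 0" and "\<forall>a\<in>AA. \<Psi> (bar a) = - \<Psi> a"
proof -
  show F0: "\<forall>u\<in>VV. F \<Psi> u = 0"
  proof -
    have "\<forall>a\<in>AA. complex_of_real (sqrt (p a)) * F \<Psi> (org a) = complex_of_real (sqrt (p (bar a))) * F \<Psi> (trm a)"
    proof
      fix a assume a: "a \<in> AA"
      have "\<forall>b\<in>{a, bar a}. UU \<Psi> b = \<Psi> b" using fx a bar_in[OF a] by simp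
      then show "complex_of_real (sqrt (p a)) * F \<Psi> (org a) = complex_of_real (sqrt (p (bar a))) * F \<Psi> (trm a)"
        using fixed_rel a by blast
    qed
    then show ?thesis using nonrev_zero[OF nr, of "F \<Psi>"] by blast
  qed
  show "\<forall>a\<in>AA. \<Psi> (bar a) = - \<Psi> a"
  proof
    fix a assume a: "a \<in> AA"
    have "\<Psi> a = 2 * complex_of_real (sqrt (p a)) * F \<Psi> (org a) - \<Psi> (bar a)"
      using fx[rule_format, OF a, symmetric] expand[OF a, of \<Psi>] by (rule trans)
    then show "\<Psi> (bar a) = - \<Psi> a" using F0 org_in[OF a] by simp
  qed
qed

lemma mem_Old[simp]: "Old x \<in> AA \<longleftrightarrow> x \<in> A0" by (auto simp: tarcs_def)
lemma mem_Out[simp]: "Out j k \<in> AA \<longleftrightarrow> j < r" by (auto simp: tarcs_def)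
lemma mem_In[simp]: "In j k \<in> AA \<longleftrightarrow> j < r" by (auto simp: tarcs_def)
lemma tv_V[simp]: "tv att j k = V v \<longleftrightarrow> k = 0 \<and> att j = v" by (simp add: tv_def)
lemma tv_T[simp]: "tv att j k = T j' k' \<longleftrightarrow> k \<noteq> 0 \<and> j = j' \<and> k = k'" by (auto simp: tv_def)

lemma out_V: "{a\<in>AA. org a = V v} = Old ` {x\<in>A0. o0 x = v} \<union> (\<lambda>j. Out j 0) ` {j\<in>{..<r}. att j = v}"
proof (rule set_eqI)
  fix a show "a \<in> {a\<in>AA. org a = V v} \<longleftrightarrow> a \<in> Old ` {x\<in>A0. o0 x = v} \<union> (\<lambda>j. Out j 0) ` {j\<in>{..<r}. att j = v}"
    by (cases a) (auto simp: image_iff)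
qed

lemma in_V: "{a\<in>AA. trm a = V v} = Old ` {x\<in>A0. t0 x = v} \<union> (\<lambda>j. In j 0) ` {j\<in>{..<r}. att j = v}"
proof (rule set_eqI)
  fix a show "a \<in> {a\<in>AA. trm a = V v} \<longleftrightarrow> a \<in> Old ` {x\<in>A0. t0 x = v} \<union> (\<lambda>j. In j 0) ` {j\<in>{..<r}. att j = v}"
    by (cases a) (auto simp: image_iff)
qed

lemma sum_out: "(\<Sum>a\<in>{a\<in>AA. org a = V v}. h a) =
   (\<Sum>x\<in>{x\<in>A0. o0 x = v}. h (Old x)) + (\<Sum>j\<in>{j\<in>{..<r}. att j = v}. h (Out j 0))"
proof -
  have "(\<Sum>a\<in>{a\<in>AA. org a = V v}. h a) = (\<Sum>a\<in>Old ` {x\<in>A0. o0 x = v}. h a) + (\<Sum>a\<in>(\<lambda>j. Out j 0) ` {j\<in>{..<r}. att j = v}. h a)"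
    unfolding out_V by (rule sum.union_disjoint) (auto simp: finA0)
  also have "\<dots> = (\<Sum>x\<in>{x\<in>A0. o0 x = v}. h (Old x)) + (\<Sum>j\<in>{j\<in>{..<r}. att j = v}. h (Out j 0))"
    by (subst sum.reindex, simp add: inj_on_def, subst sum.reindex, simp_all add: inj_on_def)
  finally show ?thesis .
qed

lemma sum_in: "(\<Sum>a\<in>{a\<in>AA. trm a = V v}. h a) =
   (\<Sum>x\<in>{x\<in>A0. t0 x = v}. h (Old x)) + (\<Sum>j\<in>{j\<in>{..<r}. att j = v}. h (In j 0))"
proof -
  have "(\<Sum>a\<in>{a\<in>AA. trm a = V v}. h a) = (\<Sum>a\<in>Old ` {x\<in>A0. t0 x = v}. h a) + (\<Sum>a\<in>(\<lambda>j. In j 0) ` {j\<in>{..<r}. att j = v}. h a)"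
    unfolding in_V by (rule sum.union_disjoint) (auto simp: finA0)
  also have "\<dots> = (\<Sum>x\<in>{x\<in>A0. t0 x = v}. h (Old x)) + (\<Sum>j\<in>{j\<in>{..<r}. att j = v}. h (In j 0))"
    by (subst sum.reindex, simp add: inj_on_def, subst sum.reindex, simp_all add: inj_on_def)
  finally show ?thesis .
qed

lemma bar_out_in: "bar ` {a\<in>AA. org a = u} = {b\<in>AA. trm b = u}"
proof
  show "bar ` {a\<in>AA. org a = u} \<subseteq> {b\<in>AA. trm b = u}" using bar_in trm_bar by auto
  show "{b\<in>AA. trm b = u} \<subseteq> bar ` {a\<in>AA. org a = u}"
  proof
    fix b assume b: "b \<in> {b\<in>AA. trm b = u}"
    then have "bar b \<in> {a\<in>AA. org a = u}" using bar_in org_bar by auto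
    moreover have "b = bar (bar b)" using b bar_bar by auto
    ultimately show "b \<in> bar ` {a\<in>AA. org a = u}" by blast
  qed
qed

lemma inj_bar: "inj_on bar {a\<in>AA. org a = u}"
proof (rule inj_onI)
  fix x y assume x: "x \<in> {a\<in>AA. org a = u}" and y: "y \<in> {a\<in>AA. org a = u}" and e: "bar x = bar y"
  then have "bar (bar x) = bar (bar y)" by simp
  then show "x = y" using bar_bar x y by simp
qed

lemma reidx: "(\<Sum>a\<in>{a\<in>AA. org a = u}. h (bar a)) = (\<Sum>b\<in>{b\<in>AA. trm b = u}. h b)"
  using sum.reindex[OF inj_bar[of u], of h] bar_out_in[of u] by simp

lemma fin_out: "finite {a\<in>AA. org a = u}"
  using fin_in[of u] unfolding bar_out_in[of u, symmetric] finite_image_iff[OF inj_bar[of u]] .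

lemma vertex_norm:
  assumes u: "u \<in> VV"
  shows "(\<Sum>a\<in>{a\<in>AA. org a = u}. (cmod (UU \<Psi> a))\<^sup>2) = (\<Sum>b\<in>{b\<in>AA. trm b = u}. (cmod (\<Psi> b))\<^sup>2)"
proof -
  let ?O = "{a\<in>AA. org a = u}" and ?I = "{b\<in>AA. trm b = u}"
  define G where "G = F \<Psi> u"
  define s where "s = (\<lambda>a. complex_of_real (sqrt (p a)))"
  have sp: "(\<Sum>a\<in>?O. p a) = 1" using p_stoch u by auto
  have sx: "(\<Sum>a\<in>?O. s a * \<Psi> (bar a)) = G"
  proof -
    have "(\<Sum>a\<in>?O. s a * \<Psi> (bar a)) = (\<Sum>a\<in>?O. complex_of_real (sqrt (p (bar (bar a)))) * \<Psi> (bar a))"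
      by (rule sum.cong) (simp_all add: s_def bar_bar)
    also have "\<dots> = G"
      unfolding G_def F_def by (rule reidx[where u=u and h="\<lambda>b. complex_of_real (sqrt (p (bar b))) * \<Psi> b"])
    finally show ?thesis .
  qed
  have scx: "(\<Sum>a\<in>?O. s a * cnj (\<Psi> (bar a))) = cnj G"
    using arg_cong[OF sx, of cnj] unfolding cnj_sum by (simp add: s_def)
  have xx: "(\<Sum>a\<in>?O. \<Psi> (bar a) * cnj (\<Psi> (bar a))) = (\<Sum>b\<in>?I. \<Psi> b * cnj (\<Psi> b))"
    by (rule reidx)
  have e: "UU \<Psi> a * cnj (UU \<Psi> a) = 4 * G * cnj G * complex_of_real (p a) - 2 * G * (s a * cnj (\<Psi> (bar a)))
        - 2 * cnj G * (s a * \<Psi> (bar a)) + \<Psi> (bar a) * cnj (\<Psi> (bar a))" if a: "a \<in> ?O" for a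
  proof -
    have pa: "p a \<ge> 0" using p_pos a by (auto intro: less_imp_le)
    have "sqrt (p a) * sqrt (p a) = p a" using pa by simp
    then have ss: "s a * s a = complex_of_real (p a)" unfolding s_def
      by (simp only: of_real_mult[symmetric])
    have cs: "cnj (s a) = s a" unfolding s_def by simp
    have "UU \<Psi> a = 2 * s a * G - \<Psi> (bar a)" using expand[of a \<Psi>] a unfolding G_def s_def by auto
    then have "UU \<Psi> a * cnj (UU \<Psi> a) = (2 * s a * G - \<Psi> (bar a)) * (2 * s a * cnj G - cnj (\<Psi> (bar a)))"
      using cs by simp
    also have "\<dots> = 4 * G * cnj G * (s a * s a) - 2 * G * (s a * cnj (\<Psi> (bar a)))
        - 2 * cnj G * (s a * \<Psi> (bar a)) + \<Psi> (bar a) * cnj (\<Psi> (bar a))"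
      by algebra
    finally show ?thesis using ss by simp
  qed
  have "complex_of_real (\<Sum>a\<in>?O. (cmod (UU \<Psi> a))\<^sup>2) = (\<Sum>a\<in>?O. UU \<Psi> a * cnj (UU \<Psi> a))"
    by (simp only: of_real_sum complex_norm_square)
  also have "\<dots> = (\<Sum>a\<in>?O. 4 * G * cnj G * complex_of_real (p a) - 2 * G * (s a * cnj (\<Psi> (bar a)))
        - 2 * cnj G * (s a * \<Psi> (bar a)) + \<Psi> (bar a) * cnj (\<Psi> (bar a)))"
    by (rule sum.cong) (use e in auto)
  also have "\<dots> = 4 * G * cnj G * complex_of_real (\<Sum>a\<in>?O. p a) - 2 * G * (\<Sum>a\<in>?O. s a * cnj (\<Psi> (bar a)))
        - 2 * cnj G * (\<Sum>a\<in>?O. s a * \<Psi> (bar a)) + (\<Sum>a\<in>?O. \<Psi> (bar a) * cnj (\<Psi> (bar a)))"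
    by (simp only: sum.distrib sum_subtractf sum_distrib_left[symmetric] of_real_sum mult.assoc)
  also have "\<dots> = (\<Sum>b\<in>?I. \<Psi> b * cnj (\<Psi> b))"
    using sp sx scx xx by simp
  also have "\<dots> = complex_of_real (\<Sum>b\<in>?I. (cmod (\<Psi> b))\<^sup>2)"
    by (simp only: of_real_sum complex_norm_square)
  finally show ?thesis using of_real_eq_iff by blast
qed

lemma VV_V: "v \<in> V0 \<Longrightarrow> V v \<in> VV" by (simp add: tverts_def)

lemma part4:
  assumes nr: "\<not> reversible VV AA org trm bar p"
    and hyp: "\<forall>a\<in>AA. \<phi> a = cut (Old ` A0) (UU (cut (Old ` A0) \<phi>)) a"
  shows "(\<Sum>x\<in>A0. cnj (\<phi> (Old x)) * UU \<Psi> (Old x)) = (\<Sum>x\<in>A0. cnj (\<phi> (Old x)) * \<Psi> (Old x))"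
proof -
  define \<psi> where "\<psi> = cut (Old ` A0) \<phi>"
  have psiO: "\<psi> (Old x) = \<phi> (Old x)" if "x \<in> A0" for x using that by (simp add: \<psi>_def cut_def)
  have psiN: "\<psi> a = 0" if "a \<notin> Old ` A0" for a using that by (simp add: \<psi>_def cut_def)
  have h1: "UU \<psi> (Old x) = \<psi> (Old x)" if x: "x \<in> A0" for x
  proof -
    have "\<phi> (Old x) = cut (Old ` A0) (UU \<psi>) (Old x)" using hyp x unfolding \<psi>_def by simp
    then show ?thesis using x psiO by (simp add: cut_def)
  qed
  define g where "g = F \<psi>"
  have gT: "g (T j k) = 0" for j k
    unfolding g_def F_def
  proof (rule sum.neutral, rule ballI)
    fix b assume b: "b \<in> {b\<in>AA. trm b = T j k}"
    then have "b \<notin> Old ` A0" by auto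
    then show "complex_of_real (sqrt (p (bar b))) * \<psi> b = 0" using psiN by simp
  qed
  have outz: "UU \<psi> (Out j 0) = 0" if j: "j < r" for j
  proof -
    have vsum: "(\<Sum>x\<in>{x\<in>A0. o0 x = v}. (cmod (\<psi> (Old x)))\<^sup>2) + (\<Sum>j\<in>{j\<in>{..<r}. att j = v}. (cmod (UU \<psi> (Out j 0)))\<^sup>2)
        = (\<Sum>x\<in>{x\<in>A0. t0 x = v}. (cmod (\<psi> (Old x)))\<^sup>2)" if v: "v \<in> V0" for v
    proof -
      have "(\<Sum>x\<in>{x\<in>A0. o0 x = v}. (cmod (\<psi> (Old x)))\<^sup>2) = (\<Sum>x\<in>{x\<in>A0. o0 x = v}. (cmod (UU \<psi> (Old x)))\<^sup>2)"
        by (rule sum.cong) (simp_all add: h1)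
      then have "(\<Sum>x\<in>{x\<in>A0. o0 x = v}. (cmod (\<psi> (Old x)))\<^sup>2) + (\<Sum>j\<in>{j\<in>{..<r}. att j = v}. (cmod (UU \<psi> (Out j 0)))\<^sup>2)
          = (\<Sum>a\<in>{a\<in>AA. org a = V v}. (cmod (UU \<psi> a))\<^sup>2)"
        by (simp only: sum_out)
      also have "\<dots> = (\<Sum>b\<in>{b\<in>AA. trm b = V v}. (cmod (\<psi> b))\<^sup>2)"
        by (rule vertex_norm[OF VV_V[OF v]])
      also have "\<dots> = (\<Sum>x\<in>{x\<in>A0. t0 x = v}. (cmod (\<psi> (Old x)))\<^sup>2) + (\<Sum>j\<in>{j\<in>{..<r}. att j = v}. (cmod (\<psi> (In j 0)))\<^sup>2)"
        by (rule sum_in)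
      also have "(\<Sum>j\<in>{j\<in>{..<r}. att j = v}. (cmod (\<psi> (In j 0)))\<^sup>2) = 0"
        by (rule sum.neutral) (auto intro!: psiN)
      finally show ?thesis by simp
    qed
    have "(\<Sum>v\<in>V0. (\<Sum>x\<in>{x\<in>A0. o0 x = v}. (cmod (\<psi> (Old x)))\<^sup>2) + (\<Sum>j\<in>{j\<in>{..<r}. att j = v}. (cmod (UU \<psi> (Out j 0)))\<^sup>2))
        = (\<Sum>v\<in>V0. (\<Sum>x\<in>{x\<in>A0. t0 x = v}. (cmod (\<psi> (Old x)))\<^sup>2))"
      by (rule sum.cong[OF refl vsum])
    moreover have "(\<Sum>v\<in>V0. (\<Sum>x\<in>{x\<in>A0. o0 x = v}. (cmod (\<psi> (Old x)))\<^sup>2)) = (\<Sum>x\<in>A0. (cmod (\<psi> (Old x)))\<^sup>2)"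
      by (rule sum.group) (use finA0 finV0 G0_orig in auto)
    moreover have "(\<Sum>v\<in>V0. (\<Sum>x\<in>{x\<in>A0. t0 x = v}. (cmod (\<psi> (Old x)))\<^sup>2)) = (\<Sum>x\<in>A0. (cmod (\<psi> (Old x)))\<^sup>2)"
      by (rule sum.group) (use finA0 finV0 G0_term in auto)
    moreover have "(\<Sum>v\<in>V0. (\<Sum>j\<in>{j\<in>{..<r}. att j = v}. (cmod (UU \<psi> (Out j 0)))\<^sup>2)) = (\<Sum>j\<in>{..<r}. (cmod (UU \<psi> (Out j 0)))\<^sup>2)"
      by (rule sum.group) (use finV0 att_in in auto)
    ultimately have "(\<Sum>j\<in>{..<r}. (cmod (UU \<psi> (Out j 0)))\<^sup>2) = 0"
      by (simp add: sum.distrib)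
    then have "(cmod (UU \<psi> (Out j 0)))\<^sup>2 = 0"
      using sum_nonneg_eq_0_iff[of "{..<r}" "\<lambda>j. (cmod (UU \<psi> (Out j 0)))\<^sup>2"] j by simp
    then show ?thesis by simp
  qed
  have gatt: "g (V (att j)) = 0" if j: "j < r" for j
  proof -
    have "UU \<psi> (Out j 0) = 2 * complex_of_real (sqrt (p (Out j 0))) * g (V (att j)) - \<psi> (In j 0)"
      using expand[of "Out j 0" \<psi>] j unfolding g_def by (simp add: tv_def)
    moreover have "\<psi> (In j 0) = 0" by (rule psiN) auto
    moreover have "p (Out j 0) > 0" using p_pos[of "Out j 0"] j by simp
    ultimately show ?thesis using outz[OF j] by simp
  qed
  have gtv: "g (tv att j k) = 0" if "j < r" for j k
    using gatt[OF that] gT by (simp add: tv_def)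
  have rel: "\<forall>a\<in>AA. complex_of_real (sqrt (p a)) * g (org a) = complex_of_real (sqrt (p (bar a))) * g (trm a)"
  proof
    fix a assume a: "a \<in> AA"
    show "complex_of_real (sqrt (p a)) * g (org a) = complex_of_real (sqrt (p (bar a))) * g (trm a)"
    proof (cases a)
      case (Old x)
      then have x: "x \<in> A0" using a by simp
      then have "inv0 x \<in> A0" using G0_inv by blast
      then have "\<forall>b\<in>{a, bar a}. UU \<psi> b = \<psi> b" using h1 x Old by auto
      then show ?thesis using fixed_rel a unfolding g_def by blast
    next
      case (Out j k)
      then show ?thesis using gtv a by simp
    next
      case (In j k)
      then show ?thesis using gtv a by simp
    qed
  qed
  have g0: "g u = 0" if "u \<in> VV" for u using nonrev_zero[OF nr rel that] .
  have anti: "\<psi> (bar a) = - \<psi> a" if a: "a \<in> AA" for a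
  proof (cases "a \<in> Old ` A0")
    case True
    have "\<psi> a = UU \<psi> a" using True h1 by auto
    also have "\<dots> = 2 * complex_of_real (sqrt (p a)) * g (org a) - \<psi> (bar a)"
      unfolding g_def by (rule expand[OF a])
    finally show ?thesis using g0[OF org_in[OF a]] by simp
  next
    case False
    then have "bar a \<notin> Old ` A0" using a by (cases a) auto
    then show ?thesis using False psiN by simp
  qed
  have D: "(\<Sum>x\<in>{x\<in>A0. o0 x = v}. complex_of_real (sqrt (p (Old x))) * \<phi> (Old x)) = 0" if v: "v \<in> V0" for v
  proof -
    let ?s = "\<lambda>a. complex_of_real (sqrt (p a))"
    have "(\<Sum>a\<in>{a\<in>AA. org a = V v}. ?s a * \<psi> a) = (\<Sum>a\<in>{a\<in>AA. org a = V v}. - (?s (bar (bar a)) * \<psi> (bar a)))"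
      by (rule sum.cong) (simp_all add: bar_bar anti)
    also have "\<dots> = - (\<Sum>b\<in>{b\<in>AA. trm b = V v}. ?s (bar b) * \<psi> b)"
      by (simp only: sum_negf reidx[where h="\<lambda>b. ?s (bar b) * \<psi> b"])
    also have "\<dots> = - g (V v)" unfolding g_def F_def by simp
    also have "\<dots> = 0" using g0[OF VV_V[OF v]] by simp
    finally have "(\<Sum>a\<in>{a\<in>AA. org a = V v}. ?s a * \<psi> a) = 0" .
    moreover have "(\<Sum>a\<in>{a\<in>AA. org a = V v}. ?s a * \<psi> a) =
        (\<Sum>x\<in>{x\<in>A0. o0 x = v}. ?s (Old x) * \<psi> (Old x)) + (\<Sum>j\<in>{j\<in>{..<r}. att j = v}. ?s (Out j 0) * \<psi> (Out j 0))"
      by (rule sum_out)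
    moreover have "(\<Sum>j\<in>{j\<in>{..<r}. att j = v}. ?s (Out j 0) * \<psi> (Out j 0)) = 0"
      by (rule sum.neutral) (auto intro!: psiN)
    moreover have "(\<Sum>x\<in>{x\<in>A0. o0 x = v}. ?s (Old x) * \<psi> (Old x)) = (\<Sum>x\<in>{x\<in>A0. o0 x = v}. ?s (Old x) * \<phi> (Old x))"
      by (rule sum.cong) (simp_all add: psiO)
    ultimately show ?thesis by simp
  qed
  have phianti: "\<phi> (Old (inv0 x)) = - \<phi> (Old x)" if x: "x \<in> A0" for x
  proof -
    have "inv0 x \<in> A0" using G0_inv x by blast
    then show ?thesis using anti[of "Old x"] x psiO by simp
  qed
  let ?c = "\<lambda>x. cnj (\<phi> (Old x))"
  let ?s = "\<lambda>x. complex_of_real (sqrt (p (Old x)))"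
  have "(\<Sum>x\<in>A0. ?c x * UU \<Psi> (Old x)) = (\<Sum>x\<in>A0. 2 * (?c x * ?s x * F \<Psi> (V (o0 x))) - ?c x * \<Psi> (Old (inv0 x)))"
    by (rule sum.cong) (simp_all add: expand algebra_simps)
  also have "\<dots> = 2 * (\<Sum>x\<in>A0. ?c x * ?s x * F \<Psi> (V (o0 x))) - (\<Sum>x\<in>A0. ?c x * \<Psi> (Old (inv0 x)))"
    by (simp add: sum_subtractf sum_distrib_left)
  also have "(\<Sum>x\<in>A0. ?c x * ?s x * F \<Psi> (V (o0 x))) = 0"
  proof -
    have "(\<Sum>x\<in>A0. ?c x * ?s x * F \<Psi> (V (o0 x))) = (\<Sum>v\<in>V0. \<Sum>x\<in>{x\<in>A0. o0 x = v}. ?c x * ?s x * F \<Psi> (V (o0 x)))"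
      by (rule sum.group[symmetric]) (use finA0 finV0 G0_orig in auto)
    also have "\<dots> = (\<Sum>v\<in>V0. F \<Psi> (V v) * cnj (\<Sum>x\<in>{x\<in>A0. o0 x = v}. ?s x * \<phi> (Old x)))"
    proof (rule sum.cong)
      fix v assume "v \<in> V0"
      show "(\<Sum>x\<in>{x\<in>A0. o0 x = v}. ?c x * ?s x * F \<Psi> (V (o0 x))) = F \<Psi> (V v) * cnj (\<Sum>x\<in>{x\<in>A0. o0 x = v}. ?s x * \<phi> (Old x))"
        unfolding cnj_sum sum_distrib_left by (rule sum.cong) (auto simp: algebra_simps)
    qed simp
    also have "\<dots> = 0" using D by simp
    finally show ?thesis .
  qed
  also have "(\<Sum>x\<in>A0. ?c x * \<Psi> (Old (inv0 x))) = (\<Sum>y\<in>A0. ?c (inv0 y) * \<Psi> (Old y))"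
    by (rule sum.reindex_bij_witness[of _ inv0 inv0]) (use G0_inv in auto)
  also have "\<dots> = - (\<Sum>y\<in>A0. ?c y * \<Psi> (Old y))"
    unfolding sum_negf[symmetric] by (rule sum.cong) (simp_all add: phianti)
  finally show ?thesis by simp
qed

end

theorem theorem3p5:
  fixes V0 :: "'v set" and A0 :: "'a set"
    and o0 t0 :: "'a \<Rightarrow> 'v" and inv0 :: "'a \<Rightarrow> 'a"
    and r :: nat and att :: "nat \<Rightarrow> 'v"
    and p :: "'a tarc \<Rightarrow> real"
    and \<alpha> :: "nat \<Rightarrow> complex"
    and \<Psi>inf :: "'a tarc \<Rightarrow> complex"
  assumes finV0: "finite V0" and finA0: "finite A0"
    and G0_orig: "\<forall>a\<in>A0. o0 a \<in> V0" and G0_term: "\<forall>a\<in>A0. t0 a \<in> V0"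
    and G0_inv: "\<forall>a\<in>A0. inv0 a \<in> A0 \<and> inv0 (inv0 a) = a \<and> inv0 a \<noteq> a
                     \<and> o0 (inv0 a) = t0 a \<and> t0 (inv0 a) = o0 a"
    and r_pos: "r \<ge> 1"
    and att_in: "\<forall>j<r. att j \<in> V0"
    and p_range: "\<forall>a\<in>tarcs A0 r. 0 < p a \<and> p a \<le> 1"
    and p_stoch: "\<forall>u\<in>tverts V0 r. (\<Sum>a\<in>{a\<in>tarcs A0 r. torig o0 att a = u}. p a) = 1"
    and p_tail: "\<forall>j<r. \<forall>k. p (In j k) = 1/2 \<and> (k \<ge> 1 \<longrightarrow> p (Out j k) = 1/2)"
    and nonrev: "\<not> reversible (tverts V0 r) (tarcs A0 r) (torig o0 att) (tterm t0 att) (tinv inv0) p"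
    and stationary: "\<forall>a. (\<lambda>n. ((szegedy (tarcs A0 r) (torig o0 att) (tterm t0 att) (tinv inv0) p) ^^ n)
                              (Psi0 \<alpha>) a) \<longlonglongrightarrow> \<Psi>inf a"
  shows "(\<forall>j<r. \<Psi>inf (Out j 0) = - \<Psi>inf (In j 0))
     \<and> (\<forall>u\<in>tverts V0 r.
          (\<Sum>a\<in>{a\<in>tarcs A0 r. tterm t0 att a = u}.
              complex_of_real (sqrt (p (tinv inv0 a))) * \<Psi>inf a) = 0)
     \<and> (\<forall>a\<in>tarcs A0 r. \<Psi>inf (tinv inv0 a) = - \<Psi>inf a)
     \<and> (\<forall>\<phi> :: 'a tarc \<Rightarrow> complex.
          (\<forall>a\<in>tarcs A0 r. \<phi> a = cut (Old ` A0)
              (szegedy (tarcs A0 r) (torig o0 att) (tterm t0 att) (tinv inv0) p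
                 (cut (Old ` A0) \<phi>)) a)
          \<longrightarrow> (\<Sum>\<^sub>\<infinity>a\<in>tarcs A0 r. cnj (\<phi> a) * \<Psi>inf a) = 0)"
  proof -
  interpret tg V0 A0 o0 t0 inv0 r att p
    by unfold_locales (use finV0 finA0 G0_orig G0_term G0_inv att_in p_range p_stoch in auto)
  define Ps where "Ps = (\<lambda>n. (UU ^^ n) (Psi0 \<alpha>))"
  have lim: "\<And>a. (\<lambda>n. Ps n a) \<longlonglongrightarrow> \<Psi>inf a" using stationary unfolding Ps_def by simp
  have step: "Ps (Suc n) = UU (Ps n)" for n unfolding Ps_def by simp
  have fx: "UU \<Psi>inf a = \<Psi>inf a" for a
  proof -
    have "(\<lambda>n. UU (Ps n) a) \<longlonglongrightarrow> UU \<Psi>inf a"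
      unfolding szegedy_def by (intro tendsto_sum tendsto_mult_left lim)
    moreover have "(\<lambda>n. UU (Ps n) a) \<longlonglongrightarrow> \<Psi>inf a"
      using LIMSEQ_Suc[OF lim[of a]] unfolding step .
    ultimately show ?thesis by (rule LIMSEQ_unique)
  qed
  have fxA: "\<forall>a\<in>AA. UU \<Psi>inf a = \<Psi>inf a" using fx by simp
  note fp = fixed_props[OF nonrev fxA]
  have P2: "\<forall>u\<in>tverts V0 r.
          (\<Sum>a\<in>{a\<in>tarcs A0 r. tterm t0 att a = u}.
              complex_of_real (sqrt (p (tinv inv0 a))) * \<Psi>inf a) = 0"
    using fp(1) unfolding F_def .
  have P3: "\<forall>a\<in>tarcs A0 r. \<Psi>inf (tinv inv0 a) = - \<Psi>inf a" using fp(2) .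
  have P1: "\<forall>j<r. \<Psi>inf (Out j 0) = - \<Psi>inf (In j 0)"
  proof (intro allI impI)
    fix j assume "j < r"
    then have "In j 0 \<in> AA" by simp
    then show "\<Psi>inf (Out j 0) = - \<Psi>inf (In j 0)" using P3 by fastforce
  qed
  have P4: "\<forall>\<phi> :: 'a tarc \<Rightarrow> complex.
          (\<forall>a\<in>tarcs A0 r. \<phi> a = cut (Old ` A0)
              (szegedy (tarcs A0 r) (torig o0 att) (tterm t0 att) (tinv inv0) p
                 (cut (Old ` A0) \<phi>)) a)
          \<longrightarrow> (\<Sum>\<^sub>\<infinity>a\<in>tarcs A0 r. cnj (\<phi> a) * \<Psi>inf a) = 0"
  proof (intro allI impI)
    fix \<phi> :: "'a tarc \<Rightarrow> complex"
    assume hyp: "\<forall>a\<in>tarcs A0 r. \<phi> a = cut (Old ` A0)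
              (szegedy (tarcs A0 r) (torig o0 att) (tterm t0 att) (tinv inv0) p
                 (cut (Old ` A0) \<phi>)) a"
    have zero: "\<phi> a = 0" if "a \<in> AA" "a \<notin> Old ` A0" for a
      using hyp that by (simp add: cut_def)
    define c where "c = (\<lambda>\<Psi>. \<Sum>x\<in>A0. cnj (\<phi> (Old x)) * \<Psi> (Old x))"
    have "(\<Sum>\<^sub>\<infinity>a\<in>tarcs A0 r. cnj (\<phi> a) * \<Psi>inf a) = (\<Sum>\<^sub>\<infinity>a\<in>Old ` A0. cnj (\<phi> a) * \<Psi>inf a)"
      by (rule infsum_cong_neutral) (auto simp: zero)
    also have "\<dots> = (\<Sum>a\<in>Old ` A0. cnj (\<phi> a) * \<Psi>inf a)" using finA0 by simp
    also have "\<dots> = c \<Psi>inf" unfolding c_def by (subst sum.reindex) (auto simp: inj_on_def)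
    finally have eq: "(\<Sum>\<^sub>\<infinity>a\<in>tarcs A0 r. cnj (\<phi> a) * \<Psi>inf a) = c \<Psi>inf" .
    have cn: "c (Ps n) = 0" for n
    proof (induction n)
      case 0 then show ?case unfolding c_def Ps_def by simp
    next
      case (Suc n)
      have "c (Ps (Suc n)) = c (Ps n)" unfolding step c_def by (rule part4[OF nonrev hyp])
      then show ?case using Suc by simp
    qed
    have "(\<lambda>n. c (Ps n)) \<longlonglongrightarrow> c \<Psi>inf"
      unfolding c_def by (intro tendsto_sum tendsto_mult_left lim)
    then have "c \<Psi>inf = 0" unfolding cn by (simp add: LIMSEQ_const_iff)
    then show "(\<Sum>\<^sub>\<infinity>a\<in>tarcs A0 r. cnj (\<phi> a) * \<Psi>inf a) = 0" using eq by simp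
  qed
  show ?thesis using P1 P2 P3 P4 by blast
qed

end
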